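(* Let $n\ge 3$ and consider the right lobster $\mathcal{L}^{1,1}_{n-2}$. For $1\le i<j\le n$ let $M_{j,i}$ be the unique tableau in $\mathrm{SET}(\mathcal{L}^{1,1}_{n-2})$ with $j$ in the top claw cell and $i$ in the bottom claw cell. Then the poset $\mathrm{SET}(\mathcal{L}^{1,1}_{n-2})$ is isomorphic to the root poset of the root system $A_{n-1}$, and also to the poset $\{(i,j)\in\mathbb{N}^2: i+j\le n-2\}$ ordered by $(i,j)\ge(k,\ell)$ iff $k\ge i$ and $\ell\ge j$. It has exactly $n-1$ minimal elements, namely $M_{i+1,i}$ for $1\le i\le n-1$; all minimal elements have the same number of inversions; and $|\mathrm{SET}(\mathcal{L}^{1,1}_{n-2})|=\binom{n}{2}$.
   Context: For positive integers $b,c_1,c_2$, the right lobster $\mathcal{L}^{c_1,c_2}_b$ is the skew diagram $\alpha/\beta$ with $\alpha=(b+1+c_2,\,b+1,\,b+1+c_1)$ and $\beta=(b+1,1,b+1)$ (rows numbered from the bottom; $\alpha/\beta$ consists of the cells in row $i$, column $j$ with $\beta_i<j\le\alpha_i$). Thus it has three rows: the bottom row with $c_2$ cells in columns $b+2,\ldots,b+1+c_2$, the middle row (the body) with $b$ cells in columns $2,\ldots,b+1$, and the top row with $c_1$ cells in columns $b+2,\ldots,b+1+c_1$; the top and bottom rows are the claws. $\mathrm{SET}$ of a skew shape with $m$ cells is the set of bijective fillings with $1,\ldots,m$ whose rows increase left to right and columns increase bottom to top. For $1\le i\le m-1$, $\pi_i(T)=T$ if $i+1$ is in a strictly higher row than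 $i$, $\pi_i(T)=s_i(T)$ (swap $i$ and $i+1$) if $i+1$ is in a strictly lower row than $i$, and $\pi_i(T)=0$ otherwise; the poset order is $T\le T'$ iff $T'$ is obtained from $T$ by a sequence of operators $\pi_i$ (all intermediate results nonzero). The number of inversions of a tableau is the number of inversions of its reading word, obtained by reading rows right to left, from the top row down. The root poset of $A_{n-1}$ is the set of positive roots $\{e_i-e_j:1\le i<j\le n\}$ with $\gamma\le\delta$ iff $\delta-\gamma$ is a nonnegative integer combination of the simple roots $e_k-e_{k+1}$. *)

theory Defs
  imports Main
begin

type_synonym cell = "nat \<times> nat"   (* (row, column), rows numbered from the bottom, starting at 1 *)
type_synonym tableau = "cell \<Rightarrow> nat"

text \<open>Skew diagram alpha/beta, alpha and beta given as lists, entry k-1 = row k (bottom row first).\<close>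
definition skew_cells :: "nat list \<Rightarrow> nat list \<Rightarrow> cell set" where
  "skew_cells \<alpha> \<beta> = {(r, c). 1 \<le> r \<and> r \<le> length \<alpha> \<and> \<beta> ! (r - 1) < c \<and> c \<le> \<alpha> ! (r - 1)}"

text \<open>Standard (bijective) fillings; values outside the shape are fixed to 0 so that
  tableaux are determined by their entries on the shape.\<close>
definition SET :: "cell set \<Rightarrow> tableau set" where
  "SET D = {T. bij_betw T D {1..card D} \<and> (\<forall>x. x \<notin> D \<longrightarrow> T x = 0)
     \<and> (\<forall>r c c'. (r, c) \<in> D \<longrightarrow> (r, c') \<in> D \<longrightarrow> c < c' \<longrightarrow> T (r, c) < T (r, c'))
     \<and> (\<forall>r r' c. (r, c) \<in> D \<longrightarrow> (r', c) \<in> D \<longrightarrow> r < r' \<longrightarrow> T (r, c) < T (r', c))}"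

definition row_of :: "cell set \<Rightarrow> tableau \<Rightarrow> nat \<Rightarrow> nat" where
  "row_of D T k = fst (THE x. x \<in> D \<and> T x = k)"

definition swap_vals :: "nat \<Rightarrow> tableau \<Rightarrow> tableau" where
  "swap_vals i T = (\<lambda>x. if T x = i then i + 1 else if T x = i + 1 then i else T x)"

text \<open>The operator pi_i; None plays the role of 0.\<close>
definition pi_op :: "cell set \<Rightarrow> nat \<Rightarrow> tableau \<Rightarrow> tableau option" where
  "pi_op D i T =
     (if row_of D T i < row_of D T (i + 1) then Some T
      else if row_of D T (i + 1) < row_of D T i then Some (swap_vals i T)
      else None)"

definition pi_step :: "cell set \<Rightarrow> tableau \<Rightarrow> tableau \<Rightarrow> bool" where
  "pi_step D T T' \<longleftrightarrow> (\<exists>i. 1 \<le> i \<and> i \<le> card D - 1 \<and> pi_op D i T = Some T')"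

definition set_le :: "cell set \<Rightarrow> tableau \<Rightarrow> tableau \<Rightarrow> bool" where
  "set_le D T T' \<longleftrightarrow> T \<in> SET D \<and> T' \<in> SET D \<and> (pi_step D)\<^sup>*\<^sup>* T T'"

definition minimal_in :: "'a set \<Rightarrow> ('a \<Rightarrow> 'a \<Rightarrow> bool) \<Rightarrow> 'a \<Rightarrow> bool" where
  "minimal_in A le x \<longleftrightarrow> x \<in> A \<and> (\<forall>y\<in>A. le y x \<longrightarrow> y = x)"

definition poset_iso :: "'a set \<Rightarrow> ('a \<Rightarrow> 'a \<Rightarrow> bool) \<Rightarrow> 'b set \<Rightarrow> ('b \<Rightarrow> 'b \<Rightarrow> bool) \<Rightarrow> bool" where
  "poset_iso A leA B leB \<longleftrightarrow>
     (\<exists>f. bij_betw f A B \<and> (\<forall>x\<in>A. \<forall>y\<in>A. leA x y \<longleftrightarrow> leB (f x) (f y)))"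

text \<open>Reading word: rows read right to left, from the top row down.\<close>
definition reading_word :: "nat list \<Rightarrow> nat list \<Rightarrow> tableau \<Rightarrow> nat list" where
  "reading_word \<alpha> \<beta> T =
     concat (map (\<lambda>r. map (\<lambda>c. T (r, c)) (rev [\<beta> ! (r - 1) + 1 ..< \<alpha> ! (r - 1) + 1]))
                 (rev [1 ..< length \<alpha> + 1]))"

definition inversions :: "nat list \<Rightarrow> nat" where
  "inversions w = card {(p, q). p < q \<and> q < length w \<and> w ! q < w ! p}"

definition lobster_alpha :: "nat \<Rightarrow> nat \<Rightarrow> nat \<Rightarrow> nat list" where
  "lobster_alpha b c1 c2 = [b + 1 + c2, b + 1, b + 1 + c1]"

definition lobster_beta :: "nat \<Rightarrow> nat list" where
  "lobster_beta b = [b + 1, 1, b + 1]"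

definition lobster :: "nat \<Rightarrow> nat \<Rightarrow> nat \<Rightarrow> cell set" where
  "lobster b c1 c2 = skew_cells (lobster_alpha b c1 c2) (lobster_beta b)"

text \<open>Root poset of A_{n-1}: vectors in Z^n as functions nat => int (coordinates 1..n).\<close>
definition evec :: "nat \<Rightarrow> nat \<Rightarrow> int" where
  "evec i = (\<lambda>k. if k = i then 1 else 0)"

definition pos_roots_A :: "nat \<Rightarrow> (nat \<Rightarrow> int) set" where
  "pos_roots_A n = {\<lambda>k. evec i k - evec j k | i j. 1 \<le> i \<and> i < j \<and> j \<le> n}"

definition root_le_A :: "nat \<Rightarrow> (nat \<Rightarrow> int) \<Rightarrow> (nat \<Rightarrow> int) \<Rightarrow> bool" where
  "root_le_A n \<gamma> \<delta> \<longleftrightarrow>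
     (\<exists>a :: nat \<Rightarrow> nat. \<forall>k. \<delta> k - \<gamma> k =
        (\<Sum>t = 1..<n. int (a t) * (evec t k - evec (t + 1) k)))"

text \<open>M_{j,i} in SET(L^{1,1}_{n-2}): j in the top claw cell (3, n), i in the bottom claw cell (1, n).\<close>
definition M_tab :: "nat \<Rightarrow> nat \<Rightarrow> nat \<Rightarrow> tableau" where
  "M_tab n j i = (THE T. T \<in> SET (lobster (n - 2) 1 1) \<and> T (3, n) = j \<and> T (1, n) = i)"

end

theory Submission
  imports Defs
begin

definition LD :: "nat \<Rightarrow> cell set" where
  "LD n = {(1,n),(3,n)} \<union> Pair (2::nat) ` {2..n-1}"

lemma D_eq:
  assumes "3 \<le> n"
  shows "lobster (n - 2) 1 1 = LD n"
proof -
  have "(r,c) \<in> lobster (n - 2) 1 1 \<longleftrightarrow> (r,c) \<in> LD n" for r c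
  proof -
    have "r \<in> {1,2,3} \<or> r < 1 \<or> r > 3" by auto
    then show ?thesis using assms
      by (auto simp: LD_def lobster_def skew_cells_def lobster_alpha_def lobster_beta_def)
  qed
  then show ?thesis by auto
qed

lemma mem_LD: "x \<in> LD n \<longleftrightarrow> x = (1,n) \<or> x = (3,n) \<or> (fst x = 2 \<and> 2 \<le> snd x \<and> snd x \<le> n - 1)"
  by (cases x) (auto simp: LD_def)

lemma fin_LD: "finite (LD n)" by (simp add: LD_def)

lemma card_D:
  assumes "3 \<le> n"
  shows "card (LD n) = n"
proof -
  have "card (Pair (2::nat) ` {2..n-1}) = n - 2"
    by (subst card_image) (auto simp: inj_on_def)
  moreover have "card {(1::nat,n),(3,n)} = 2" by simp
  moreover have "{(1::nat,n),(3,n)} \<inter> Pair 2 ` {2..n-1} = {}" by auto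
  ultimately show ?thesis using assms unfolding LD_def
    by (subst card_Un_disjoint) auto
qed

definition tab :: "nat \<Rightarrow> nat \<Rightarrow> nat \<Rightarrow> tableau" where
  "tab n i j = (\<lambda>(r,c). if r = 1 \<and> c = n then i else if r = 3 \<and> c = n then j
      else if r = 2 \<and> 2 \<le> c \<and> c \<le> n - 1 then (if c - 1 < i then c - 1 else if c < j then c else c + 1)
      else 0)"

lemma tab_SET:
  assumes "3 \<le> n" "1 \<le> i" "i < j" "j \<le> n"
  shows "tab n i j \<in> SET (LD n)"
proof -
  let ?D = "LD n"
  have img: "tab n i j ` ?D = {1..n}"
  proof
    show "tab n i j ` ?D \<subseteq> {1..n}"
      using assms by (auto simp: mem_LD tab_def)
  next
    show "{1..n} \<subseteq> tab n i j ` ?D"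
    proof
      fix v assume v: "v \<in> {1..n}"
      have "v = i \<or> v = j \<or> v < i \<or> (i < v \<and> v < j) \<or> j < v" by auto
      moreover
      { assume "v = i" then have "v = tab n i j (1,n)" by (simp add: tab_def) }
      moreover
      { assume "v = j" then have "v = tab n i j (3,n)" using assms by (simp add: tab_def) }
      moreover
      { assume "v < i" then have "v = tab n i j (2,v+1)" using assms v by (auto simp: tab_def) }
      moreover
      { assume "i < v \<and> v < j" then have "v = tab n i j (2,v)" using assms v by (auto simp: tab_def) }
      moreover
      { assume "j < v" then have "v = tab n i j (2,v-1)" using assms v by (auto simp: tab_def) }
      moreover have "(1,n) \<in> ?D" "(3,n) \<in> ?D" by (auto simp: mem_LD)
      moreover have "v < i \<Longrightarrow> (2,v+1) \<in> ?D" using assms v by (auto simp: mem_LD)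
      moreover have "i < v \<and> v < j \<Longrightarrow> (2,v) \<in> ?D" using assms v by (auto simp: mem_LD)
      moreover have "j < v \<Longrightarrow> (2,v-1) \<in> ?D" using assms v by (auto simp: mem_LD)
      ultimately show "v \<in> tab n i j ` ?D" by blast
    qed
  qed
  have inj: "inj_on (tab n i j) ?D"
    by (rule eq_card_imp_inj_on[OF fin_LD]) (simp add: img card_D assms)
  have bij: "bij_betw (tab n i j) ?D {1..card ?D}"
    using inj img by (simp add: bij_betw_def card_D assms)
  show ?thesis
    unfolding SET_def
    using assms bij by (auto simp: mem_LD tab_def)
qed


lemma SET_bij:
  assumes "3 \<le> n" "T \<in> SET (LD n)"
  shows "bij_betw T (LD n) {1..n}"
  using assms by (simp add: SET_def card_D)

lemma SET_row:
  assumes "T \<in> SET (LD n)" "2 \<le> c" "c < c'" "c' \<le> n - 1"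
  shows "T (2,c) < T (2,c')"
  using assms unfolding SET_def by (auto simp: mem_LD)

lemma SET_col:
  assumes "T \<in> SET (LD n)"
  shows "T (1,n) < T (3,n)"
  using assms unfolding SET_def by (auto simp: mem_LD)

lemma SET_out:
  assumes "T \<in> SET (LD n)" "x \<notin> LD n"
  shows "T x = 0"
  using assms unfolding SET_def by (cases x) auto

lemma SET_range:
  assumes "3 \<le> n" "T \<in> SET (LD n)"
  shows "1 \<le> T (1,n)" "T (3,n) \<le> n"
proof -
  have "T ` LD n = {1..n}" using SET_bij[OF assms] by (simp add: bij_betw_def)
  moreover have "(1,n) \<in> LD n" "(3,n) \<in> LD n" by (auto simp: mem_LD)
  ultimately show "1 \<le> T (1,n)" "T (3,n) \<le> n" by auto
qed

lemma SET_unique: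
  assumes n: "3 \<le> n" and T: "T \<in> SET (LD n)" and T': "T' \<in> SET (LD n)"
    and e1: "T (1,n) = T' (1,n)" and e3: "T (3,n) = T' (3,n)"
  shows "T = T'"
proof -
  define B where "B = Pair (2::nat) ` {2..n-1}"
  have LDB: "LD n - {(1,n),(3,n)} = B" by (auto simp: B_def LD_def)
  have setL: "set (map (\<lambda>c. S (2,c)) [2..<n]) = {1..n} - {S (1,n), S (3,n)}"
    if S: "S \<in> SET (LD n)" for S
  proof -
    have bij: "bij_betw S (LD n) {1..n}" using SET_bij[OF n S] .
    have "set (map (\<lambda>c. S (2,c)) [2..<n]) = S ` B" by (auto simp: B_def)
    also have "\<dots> = S ` (LD n - {(1,n),(3,n)})" by (simp only: LDB)
    also have "\<dots> = S ` LD n - S ` {(1,n),(3,n)}"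
      by (rule inj_on_image_set_diff) (use bij in \<open>auto simp: bij_betw_def mem_LD\<close>)
    also have "\<dots> = {1..n} - {S (1,n), S (3,n)}" using bij by (simp add: bij_betw_def)
    finally show ?thesis .
  qed
  have sortL: "sorted_wrt (<) (map (\<lambda>c. S (2,c)) [2..<n])"
    if S: "S \<in> SET (LD n)" for S
    unfolding sorted_wrt_map
    by (rule sorted_wrt_mono_rel[OF _ sorted_wrt_upt]) (use SET_row[OF S] in auto)
  have "map (\<lambda>c. T (2,c)) [2..<n] = map (\<lambda>c. T' (2,c)) [2..<n]"
    by (rule strict_sorted_equal[OF sortL[OF T'] sortL[OF T]]) (simp only: setL[OF T] setL[OF T'] e1 e3)
  then have row: "T (2,c) = T' (2,c)" if "2 \<le> c" "c \<le> n - 1" for c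
    using that n by auto
  show ?thesis
  proof
    fix x show "T x = T' x"
    proof (cases "x \<in> LD n")
      case True then show ?thesis using e1 e3 row by (cases x) (auto simp: mem_LD)
    next
      case False then show ?thesis using SET_out[OF T] SET_out[OF T'] by simp
    qed
  qed
qed

lemma tab_vals: "tab n i j (1,n) = i" "3 \<le> n \<Longrightarrow> tab n i j (3,n) = j"
  by (auto simp: tab_def)

lemma SET_char:
  assumes n: "3 \<le> n" and T: "T \<in> SET (LD n)"
  shows "T = tab n (T (1,n)) (T (3,n))"
  by (rule SET_unique[OF n T tab_SET[OF n SET_range(1)[OF n T] SET_col[OF T] SET_range(2)[OF n T]]])
    (use n in \<open>auto simp: tab_def\<close>)


lemma row_of_cell:
  assumes n: "3 \<le> n" and T: "T \<in> SET (LD n)" and x: "x \<in> LD n"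
  shows "row_of (LD n) T (T x) = fst x"
proof -
  have inj: "inj_on T (LD n)" using SET_bij[OF n T] by (simp add: bij_betw_def)
  have "(THE y. y \<in> LD n \<and> T y = T x) = x"
    by (rule the_equality) (use x inj in \<open>auto simp: inj_on_def\<close>)
  then show ?thesis by (simp add: row_of_def)
qed

lemma row_of_val:
  assumes n: "3 \<le> n" and T: "T \<in> SET (LD n)" and k: "1 \<le> k" "k \<le> n"
  shows "row_of (LD n) T k = (if k = T (1,n) then 1 else if k = T (3,n) then 3 else 2)"
proof -
  have "k \<in> T ` LD n" using SET_bij[OF n T] k by (auto simp: bij_betw_def)
  then obtain x where x: "x \<in> LD n" "k = T x" by auto
  have c1: "(1,n) \<in> LD n" and c3: "(3,n) \<in> LD n" by (auto simp: mem_LD)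
  have inj: "inj_on T (LD n)" using SET_bij[OF n T] by (simp add: bij_betw_def)
  show ?thesis
  proof (cases "x = (1,n)")
    case True then show ?thesis using x row_of_cell[OF n T x(1)] by simp
  next
    case F1: False
    show ?thesis
    proof (cases "x = (3,n)")
      case True then show ?thesis using x row_of_cell[OF n T x(1)] F1 SET_col[OF T] by simp
    next
      case False
      then have "fst x = 2" using F1 x(1) by (auto simp: mem_LD)
      moreover have "T x \<noteq> T (1,n)" "T x \<noteq> T (3,n)"
        using inj x(1) c1 c3 F1 False by (auto simp: inj_on_def)
      ultimately show ?thesis using x row_of_cell[OF n T x(1)] by simp
    qed
  qed
qed

lemma swap_top:
  assumes "1 \<le> i" "i < j" "j < n"
  shows "swap_vals j (tab n i j) = tab n i (j+1)"
proof
  fix x :: cell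
  obtain r c where x: "x = (r,c)" by fastforce
  show "swap_vals j (tab n i j) x = tab n i (j+1) x"
    unfolding x swap_vals_def tab_def using assms
    by (cases "r = 1"; cases "r = 2"; cases "r = 3"; simp; linarith?)
qed

lemma swap_bot:
  assumes "2 \<le> i" "i < j" "j \<le> n"
  shows "swap_vals (i - 1) (tab n i j) = tab n (i - 1) j"
proof
  fix x :: cell
  obtain r c where x: "x = (r,c)" by fastforce
  show "swap_vals (i - 1) (tab n i j) x = tab n (i - 1) j x"
    unfolding x swap_vals_def tab_def using assms
    by (cases "r = 1"; cases "r = 2"; cases "r = 3"; simp; linarith?)
qed


definition valid :: "nat \<Rightarrow> nat \<Rightarrow> nat \<Rightarrow> bool" where
  "valid n i j \<longleftrightarrow> 1 \<le> i \<and> i < j \<and> j \<le> n"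

lemma tab_SET': "3 \<le> n \<Longrightarrow> valid n i j \<Longrightarrow> tab n i j \<in> SET (LD n)"
  using tab_SET by (simp add: valid_def)

lemma tab_inj:
  assumes "3 \<le> n" "tab n i j = tab n i' j'"
  shows "i = i' \<and> j = j'"
proof -
  have "tab n i j (1,n) = tab n i' j' (1,n)" "tab n i j (3,n) = tab n i' j' (3,n)"
    using assms by simp_all
  then show ?thesis using assms by (simp add: tab_def)
qed

lemma pi_tab:
  assumes n: "3 \<le> n" and v: "valid n i j" and k: "1 \<le> k" "k \<le> n - 1"
  shows "pi_op (LD n) k (tab n i j) =
    (if k = j then Some (tab n i (j+1)) else if k + 1 = i then Some (tab n (i-1) j)
     else if k = i \<or> k + 1 = j then Some (tab n i j) else None)"
proof -
  have T: "tab n i j \<in> SET (LD n)" using tab_SET'[OF n v] .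
  have v1: "tab n i j (1,n) = i" and v3: "tab n i j (3,n) = j" using n by (simp_all add: tab_def)
  have r1: "row_of (LD n) (tab n i j) k = (if k = i then 1 else if k = j then 3 else 2)"
    using row_of_val[OF n T k(1)] k v1 v3 by simp
  have r2: "row_of (LD n) (tab n i j) (k+1) = (if k+1 = i then 1 else if k+1 = j then 3 else 2)"
    using row_of_val[OF n T, of "k+1"] k v1 v3 by simp
  show ?thesis
  proof (cases "k = j")
    case True
    have "swap_vals k (tab n i j) = tab n i (j+1)" using swap_top[of i j n] v k True n
      by (simp add: valid_def)
    then show ?thesis using v k True unfolding pi_op_def r1 r2
      by (simp add: valid_def)
  next
    case F1: False
    show ?thesis
    proof (cases "k + 1 = i")
      case True
      then have ki: "k = i - 1" by simp
      have "2 \<le> i" "i < j" "j \<le> n" using True k v by (auto simp: valid_def)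
      then have "swap_vals k (tab n i j) = tab n (i-1) j" unfolding ki by (rule swap_bot)
      then show ?thesis using v k True F1 unfolding pi_op_def r1 r2 by (simp add: valid_def)
    next
      case False
      then show ?thesis using v k F1 unfolding pi_op_def r1 r2 by (auto simp: valid_def)
    qed
  qed
qed

lemma step_tab:
  assumes n: "3 \<le> n" and v: "valid n i j" and st: "pi_step (LD n) (tab n i j) T'"
  shows "\<exists>i' j'. T' = tab n i' j' \<and> valid n i' j' \<and> i' \<le> i \<and> j \<le> j'"
proof -
  obtain k where k: "1 \<le> k" "k \<le> n - 1" "pi_op (LD n) k (tab n i j) = Some T'"
    using st n by (auto simp: pi_step_def card_D)
  show ?thesis
  proof (cases "k = j")
    case True
    then show ?thesis using k v pi_tab[OF n v k(1,2)]
      by (intro exI[of _ i] exI[of _ "j+1"]) (auto simp: valid_def)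
  next
    case F1: False
    show ?thesis
    proof (cases "k + 1 = i")
      case True
      then show ?thesis using k v pi_tab[OF n v k(1,2)] F1
        by (intro exI[of _ "i-1"] exI[of _ j]) (auto simp: valid_def)
    next
      case False
      then show ?thesis using k v pi_tab[OF n v k(1,2)] F1
        by (intro exI[of _ i] exI[of _ j]) (auto split: if_splits)
    qed
  qed
qed

lemma step_top:
  assumes n: "3 \<le> n" and v: "valid n i j" and "j < n"
  shows "pi_step (LD n) (tab n i j) (tab n i (j+1))"
proof -
  have p: "1 \<le> j" "j \<le> n - 1" using assms by (auto simp: valid_def)
  then have "pi_op (LD n) j (tab n i j) = Some (tab n i (j+1))"
    using pi_tab[OF n v p] by simp
  then show ?thesis unfolding pi_step_def using assms
    by (intro exI[of _ j]) (auto simp: card_D valid_def)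
qed

lemma step_bot:
  assumes n: "3 \<le> n" and v: "valid n i j" and "2 \<le> i"
  shows "pi_step (LD n) (tab n i j) (tab n (i-1) j)"
proof -
  have p: "1 \<le> i - 1" "i - 1 \<le> n - 1" using assms by (auto simp: valid_def)
  have "i - 1 \<noteq> j" "i - 1 + 1 = i" using assms by (auto simp: valid_def)
  then have "pi_op (LD n) (i-1) (tab n i j) = Some (tab n (i-1) j)"
    using pi_tab[OF n v p] by simp
  then show ?thesis unfolding pi_step_def using assms
    by (intro exI[of _ "i-1"]) (auto simp: card_D valid_def)
qed

lemma chain_top:
  assumes n: "3 \<le> n"
  shows "valid n i j \<Longrightarrow> j + d \<le> n \<Longrightarrow> (pi_step (LD n))\<^sup>*\<^sup>* (tab n i j) (tab n i (j+d))"
proof (induction d arbitrary: j)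
  case 0 then show ?case by simp
next
  case (Suc d)
  have "valid n i (j+1)" using Suc.prems by (simp add: valid_def)
  then have "(pi_step (LD n))\<^sup>*\<^sup>* (tab n i (j+1)) (tab n i (j+1+d))"
    using Suc.IH[of "j+1"] Suc.prems(2) by simp
  moreover have "pi_step (LD n) (tab n i j) (tab n i (j+1))"
    using step_top[OF n Suc.prems(1)] Suc.prems by simp
  ultimately show ?case by (simp add: converse_rtranclp_into_rtranclp)
qed

lemma chain_bot:
  assumes n: "3 \<le> n"
  shows "valid n i j \<Longrightarrow> d < i \<Longrightarrow> (pi_step (LD n))\<^sup>*\<^sup>* (tab n i j) (tab n (i-d) j)"
proof (induction d)
  case 0 then show ?case by simp
next
  case (Suc d)
  then have "(pi_step (LD n))\<^sup>*\<^sup>* (tab n i j) (tab n (i-d) j)" by simp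
  moreover have "valid n (i-d) j" "2 \<le> i - d" using Suc.prems by (auto simp: valid_def)
  then have "pi_step (LD n) (tab n (i-d) j) (tab n (i-d-1) j)"
    by (rule step_bot[OF n])
  ultimately show ?case by (simp add: rtranclp.rtrancl_into_rtrancl)
qed

lemma le_tab:
  assumes n: "3 \<le> n" and v: "valid n i j" and v': "valid n i' j'"
  shows "set_le (LD n) (tab n i j) (tab n i' j') \<longleftrightarrow> i' \<le> i \<and> j \<le> j'"
proof
  assume "set_le (LD n) (tab n i j) (tab n i' j')"
  then have st: "(pi_step (LD n))\<^sup>*\<^sup>* (tab n i j) (tab n i' j')" by (simp add: set_le_def)
  have "\<exists>a b. T = tab n a b \<and> valid n a b \<and> a \<le> i \<and> j \<le> b"
    if "(pi_step (LD n))\<^sup>*\<^sup>* (tab n i j) T" for T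
    using that
  proof (induction rule: rtranclp_induct)
    case base then show ?case using v by blast
  next
    case (step y z)
    then obtain a b where ab: "y = tab n a b" "valid n a b" "a \<le> i" "j \<le> b" by blast
    then show ?case using step_tab[OF n ab(2)] step.hyps(2) by fastforce
  qed
  from this[OF st] obtain a b where "tab n i' j' = tab n a b" "a \<le> i" "j \<le> b" by blast
  then show "i' \<le> i \<and> j \<le> j'" using tab_inj[OF n] by blast
next
  assume le: "i' \<le> i \<and> j \<le> j'"
  have "(pi_step (LD n))\<^sup>*\<^sup>* (tab n i j) (tab n i j')"
    using chain_top[OF n v, of "j' - j"] le v' by (simp add: valid_def)
  moreover have "valid n i j'" using v v' le by (simp add: valid_def)
  then have "(pi_step (LD n))\<^sup>*\<^sup>* (tab n i j') (tab n i' j')"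
    using chain_bot[OF n, of i j' "i - i'"] le v' by (simp add: valid_def)
  ultimately show "set_le (LD n) (tab n i j) (tab n i' j')"
    using tab_SET'[OF n v] tab_SET'[OF n v'] by (simp add: set_le_def)
qed


lemma SET_eq:
  assumes n: "3 \<le> n"
  shows "SET (LD n) = (\<lambda>(i,j). tab n i j) ` {(i,j). valid n i j}"
proof
  show "SET (LD n) \<subseteq> (\<lambda>(i,j). tab n i j) ` {(i,j). valid n i j}"
  proof
    fix T assume T: "T \<in> SET (LD n)"
    have "valid n (T (1,n)) (T (3,n))"
      using SET_range[OF n T] SET_col[OF T] by (simp add: valid_def)
    then show "T \<in> (\<lambda>(i,j). tab n i j) ` {(i,j). valid n i j}"
      using SET_char[OF n T] by force
  qed
next
  show "(\<lambda>(i,j). tab n i j) ` {(i,j). valid n i j} \<subseteq> SET (LD n)"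
    using tab_SET'[OF n] by auto
qed

lemma bij_h:
  assumes n: "3 \<le> n"
  shows "bij_betw (\<lambda>T. (T (1,n), T (3,n))) (SET (LD n)) {(i,j). valid n i j}"
proof (rule bij_betw_byWitness[where f' = "\<lambda>(i,j). tab n i j"])
  show "\<forall>a\<in>SET (LD n). (\<lambda>(i, j). tab n i j) (a (1, n), a (3, n)) = a"
    using SET_char[OF n] by auto
  show "\<forall>a'\<in>{(i, j). valid n i j}. (\<lambda>T. (T (1, n), T (3, n))) ((\<lambda>(i, j). tab n i j) a') = a'"
    using n by (auto simp: tab_def)
  show "(\<lambda>T. (T (1, n), T (3, n))) ` SET (LD n) \<subseteq> {(i, j). valid n i j}"
    using SET_range[OF n] SET_col by (auto simp: valid_def)
  show "(\<lambda>(i, j). tab n i j) ` {(i, j). valid n i j} \<subseteq> SET (LD n)"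
    using SET_eq[OF n] by simp
qed

lemma iso_from_pairs:
  assumes n: "3 \<le> n" and bij: "bij_betw f {(i,j). valid n i j} B"
    and ord: "\<And>i j i' j'. valid n i j \<Longrightarrow> valid n i' j' \<Longrightarrow>
               leB (f (i,j)) (f (i',j')) \<longleftrightarrow> i' \<le> i \<and> j \<le> j'"
  shows "poset_iso (SET (LD n)) (set_le (LD n)) B leB"
  unfolding poset_iso_def
proof (intro exI conjI)
  let ?h = "\<lambda>T. (T (1,n), T (3,n))"
  show "bij_betw (f \<circ> ?h) (SET (LD n)) B"
    by (rule bij_betw_trans[OF bij_h[OF n] bij])
  show "\<forall>x\<in>SET (LD n). \<forall>y\<in>SET (LD n). set_le (LD n) x y = leB ((f \<circ> ?h) x) ((f \<circ> ?h) y)"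
  proof (intro ballI)
    fix x y assume x: "x \<in> SET (LD n)" and y: "y \<in> SET (LD n)"
    have vx: "valid n (x (1,n)) (x (3,n))" using SET_range[OF n x] SET_col[OF x] by (simp add: valid_def)
    have vy: "valid n (y (1,n)) (y (3,n))" using SET_range[OF n y] SET_col[OF y] by (simp add: valid_def)
    have "set_le (LD n) x y = set_le (LD n) (tab n (x (1,n)) (x (3,n))) (tab n (y (1,n)) (y (3,n)))"
      using SET_char[OF n x] SET_char[OF n y] by simp
    also have "\<dots> = (y (1,n) \<le> x (1,n) \<and> x (3,n) \<le> y (3,n))" by (rule le_tab[OF n vx vy])
    also have "\<dots> = leB ((f \<circ> ?h) x) ((f \<circ> ?h) y)" using ord[OF vx vy] by simp
    finally show "set_le (LD n) x y = leB ((f \<circ> ?h) x) ((f \<circ> ?h) y)" .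
  qed
qed

lemma sum_evec:
  "(\<Sum>t = 1..<n. int (a t) * (evec t k - evec (t + 1) k)) =
     (if 1 \<le> k \<and> k < n then int (a k) else 0) - (if 2 \<le> k \<and> k \<le> n then int (a (k - 1)) else 0)"
proof -
  have "(\<Sum>t = 1..<n. int (a t) * (evec t k - evec (t + 1) k)) =
        (\<Sum>t = 1..<n. (if t = k then int (a t) else 0)) - (\<Sum>t = 1..<n. (if t = k - 1 \<and> 1 \<le> k then int (a t) else 0))"
    unfolding sum_subtractf[symmetric] by (rule sum.cong) (auto simp: evec_def)
  also have "(\<Sum>t = 1..<n. (if t = k then int (a t) else 0)) = (if 1 \<le> k \<and> k < n then int (a k) else 0)"
    by (simp add: sum.delta')
  also have "(\<Sum>t = 1..<n. (if t = k - 1 \<and> 1 \<le> k then int (a t) else 0)) = (if 2 \<le> k \<and> k \<le> n then int (a (k - 1)) else 0)"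
  proof (cases "1 \<le> k")
    case True then show ?thesis by (simp add: sum.delta') linarith
  next
    case False then show ?thesis by simp
  qed
  finally show ?thesis .
qed


definition ind :: "nat \<Rightarrow> nat \<Rightarrow> int" where
  "ind x K = (if x \<le> K then 1 else 0)"

lemma root_le_iff:
  assumes v: "valid n i j" and v': "valid n i' j'"
  shows "root_le_A n (\<lambda>k. evec i k - evec j k) (\<lambda>k. evec i' k - evec j' k) \<longleftrightarrow> i' \<le> i \<and> j \<le> j'"
proof
  assume "root_le_A n (\<lambda>k. evec i k - evec j k) (\<lambda>k. evec i' k - evec j' k)"
  then obtain a :: "nat \<Rightarrow> nat" where a: "\<And>k. (evec i' k - evec j' k) - (evec i k - evec j k) =
      (\<Sum>t = 1..<n. int (a t) * (evec t k - evec (t + 1) k))"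
    unfolding root_le_A_def by blast
  define A where "A k = (if 1 \<le> k \<and> k < n then int (a k) else 0)" for k
  define S where "S K = ind i' K - ind j' K - ind i K + ind j K" for K
  have d: "(evec i' k - evec j' k) - (evec i k - evec j k) = A k - A (k - 1)" if "1 \<le> k" for k
    unfolding a sum_evec A_def using that by auto
  have AS: "A K = S K" for K
  proof (induction K)
    case 0 then show ?case using v v' by (simp add: A_def S_def ind_def valid_def)
  next
    case (Suc K)
    have "A (Suc K) = A K + ((evec i' (Suc K) - evec j' (Suc K)) - (evec i (Suc K) - evec j (Suc K)))"
      using d[of "Suc K"] by simp
    also have "\<dots> = S (Suc K)" unfolding Suc S_def ind_def evec_def by auto
    finally show ?case .
  qed
  have pos: "S K \<ge> 0" for K using AS[of K] by (simp add: A_def split: if_splits)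
  have c1: "i' \<le> i"
  proof (rule ccontr)
    assume "\<not> i' \<le> i"
    then have "S i < 0" using v v' by (simp add: S_def ind_def valid_def)
    then show False using pos[of i] by simp
  qed
  have c2: "j \<le> j'"
  proof (rule ccontr)
    assume "\<not> j \<le> j'"
    then have "ind i' (j-1) = 1" "ind j' (j-1) = 1" "ind i (j-1) = 1" "ind j (j-1) = 0"
      using v v' c1 by (auto simp: ind_def valid_def)
    then have "S (j - 1) < 0" by (simp add: S_def)
    then show False using pos[of "j - 1"] by simp
  qed
  show "i' \<le> i \<and> j \<le> j'" using c1 c2 by simp
next
  assume le: "i' \<le> i \<and> j \<le> j'"
  define a where "a t = (if i' \<le> t \<and> t < i then 1 else 0) + (if j \<le> t \<and> t < j' then 1 else (0::nat))" for t
  have ia: "int (a t) = ind i' t - ind i t + ind j t - ind j' t" for t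
    using le by (auto simp: a_def ind_def)
  have a0: "a 0 = 0" using v v' by (simp add: a_def valid_def)
  have an: "a t = 0" if "n \<le> t" for t using that v v' by (simp add: a_def valid_def)
  have dind: "ind x k - ind x (k - 1) = (if k = x then 1 else 0)" if "1 \<le> k" "1 \<le> x" for x k
    using that by (auto simp: ind_def)
  have "(evec i' k - evec j' k) - (evec i k - evec j k) =
      (\<Sum>t = 1..<n. int (a t) * (evec t k - evec (t + 1) k))" for k
  proof (cases "k = 0")
    case True
    then show ?thesis unfolding sum_evec using v v' by (simp add: evec_def valid_def)
  next
    case False
    have A: "(if 1 \<le> k \<and> k < n then int (a k) else 0) = int (a k)"
      using an[of k] False by auto
    have B: "(if 2 \<le> k \<and> k \<le> n then int (a (k - 1)) else 0) = int (a (k - 1))"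
    proof (cases "2 \<le> k \<and> k \<le> n")
      case True then show ?thesis by simp
    next
      case F: False
      then have "k = 1 \<or> n \<le> k - 1" using False by auto
      then show ?thesis using a0 an[of "k-1"] F by auto
    qed
    have "int (a k) - int (a (k - 1)) = (ind i' k - ind i' (k-1)) - (ind i k - ind i (k-1))
        + (ind j k - ind j (k-1)) - (ind j' k - ind j' (k-1))"
      unfolding ia by simp
    also have "\<dots> = (evec i' k - evec j' k) - (evec i k - evec j k)"
    proof -
      have k1: "1 \<le> k" using False by simp
      have "1 \<le> i'" "1 \<le> i" "1 \<le> j" "1 \<le> j'" using v v' by (auto simp: valid_def)
      then show ?thesis using dind[OF k1] by (simp add: evec_def)
    qed
    finally show ?thesis unfolding sum_evec A B by simp
  qed
  then show "root_le_A n (\<lambda>k. evec i k - evec j k) (\<lambda>k. evec i' k - evec j' k)"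
    unfolding root_le_A_def by blast
qed


lemma inv_Cons: "inversions (x # xs) = length (filter (\<lambda>y. y < x) xs) + inversions xs"
proof -
  let ?S = "\<lambda>w::nat list. {(p, q). p < q \<and> q < length w \<and> w ! q < w ! p}"
  let ?A = "(\<lambda>q. (0::nat, Suc q)) ` {q. q < length xs \<and> xs ! q < x}"
  let ?B = "(\<lambda>(p, q). (Suc p, Suc q)) ` ?S xs"
  have eq: "?S (x # xs) = ?A \<union> ?B"
  proof
    show "?S (x # xs) \<subseteq> ?A \<union> ?B"
    proof
      fix z assume z: "z \<in> ?S (x # xs)"
      obtain p q where pq: "z = (p, q)" by fastforce
      from z pq have h: "p < q" "q < Suc (length xs)" "(x # xs) ! q < (x # xs) ! p" by auto
      then obtain q' where q': "q = Suc q'" by (cases q) auto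
      show "z \<in> ?A \<union> ?B"
      proof (cases p)
        case 0 then show ?thesis using h q' pq by auto
      next
        case (Suc p')
        then have "(p', q') \<in> ?S xs" using h q' by auto
        then show ?thesis using pq Suc q' by force
      qed
    qed
  next
    show "?A \<union> ?B \<subseteq> ?S (x # xs)" by auto
  qed
  have fin: "finite (?S xs)"
    by (rule finite_subset[of _ "{..<length xs} \<times> {..<length xs}"]) auto
  have "inversions (x # xs) = card (?A \<union> ?B)" unfolding inversions_def eq[symmetric] by simp
  also have "\<dots> = card ?A + card ?B"
    by (rule card_Un_disjoint) (use fin in auto)
  also have "card ?A = card {q. q < length xs \<and> xs ! q < x}"
    by (rule card_image) (auto simp: inj_on_def)
  also have "\<dots> = length (filter (\<lambda>y. y < x) xs)" by (simp add: length_filter_conv_card)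
  also have "card ?B = card (?S xs)"
    by (rule card_image) (auto simp: inj_on_def)
  also have "\<dots> = inversions xs" by (simp add: inversions_def)
  finally show ?thesis .
qed

lemma inv_Nil: "inversions [] = 0"
  by (simp add: inversions_def)

lemma inv_snoc: "inversions (xs @ [y]) = inversions xs + length (filter (\<lambda>x. y < x) xs)"
proof (induction xs)
  case Nil then show ?case by (simp add: inv_Cons inv_Nil)
next
  case (Cons a xs) then show ?case by (simp add: inv_Cons)
qed

lemma inv_dec: "sorted_wrt (>) xs \<Longrightarrow> inversions xs = length xs choose 2"
proof (induction xs)
  case Nil then show ?case by (simp add: inv_Nil)
next
  case (Cons a xs)
  then have "filter (\<lambda>y. y < a) xs = xs" by (auto intro: filter_True)
  moreover have "Suc m choose 2 = m + (m choose 2)" for m by (simp add: numeral_2_eq_2)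
  ultimately show ?case using Cons by (simp add: inv_Cons)
qed

lemma reading_word_eq:
  assumes n: "3 \<le> n"
  shows "reading_word (lobster_alpha (n - 2) 1 1) (lobster_beta (n - 2)) T
       = T (3,n) # map (\<lambda>c. T (2,c)) (rev [2..<n]) @ [T (1,n)]"
proof -
  have al: "lobster_alpha (n - 2) 1 1 = [n, n - 1, n]"
    using n by (simp add: lobster_alpha_def; linarith)
  have be: "lobster_beta (n - 2) = [n - 1, 1, n - 1]"
    using n by (simp add: lobster_beta_def)
  have r: "rev [1..<length [n, n - 1, n] + 1] = [3,2,1]"
    by (simp add: upt_rec)
  have e1: "[n - 1 + 1..<n + 1] = [n]" using n by simp
  have e2: "[1 + 1..<n - 1 + 1] = [2..<n]" using n by (simp add: numeral_2_eq_2)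
  have e3: "[n..<Suc n] = [n]" by simp
  have e4: "[Suc (Suc 0)..<n] = [2..<n]" by (simp add: numeral_2_eq_2)
  show ?thesis
    unfolding reading_word_def al be r
    using n by (simp add: e1 e2 e3 e4 del: upt_Suc)
qed

lemma inv_min:
  assumes n: "3 \<le> n" and T: "T \<in> SET (LD n)" and m: "T (3,n) = T (1,n) + 1"
  shows "inversions (reading_word (lobster_alpha (n - 2) 1 1) (lobster_beta (n - 2)) T)
     = n - 1 + ((n - 2) choose 2)"
proof -
  let ?i = "T (1,n)"
  define mid where "mid = map (\<lambda>c. T (2,c)) (rev [2..<n])"
  have len: "length mid = n - 2" by (simp add: mid_def)
  have dec: "sorted_wrt (>) mid"
    unfolding mid_def sorted_wrt_map sorted_wrt_rev
    by (rule sorted_wrt_mono_rel[OF _ sorted_wrt_upt]) (use SET_row[OF T] in auto)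
  have inj: "inj_on T (LD n)" using SET_bij[OF n T] by (simp add: bij_betw_def)
  have notin: "?i \<notin> set mid" "?i + 1 \<notin> set mid"
  proof -
    have "T (2,c) \<noteq> T (1,n)" "T (2,c) \<noteq> T (3,n)" if "2 \<le> c" "c < n" for c
    proof -
      have "(2,c) \<in> LD n" "(1,n) \<in> LD n" "(3,n) \<in> LD n" using that by (auto simp: mem_LD)
      then show "T (2,c) \<noteq> T (1,n)" "T (2,c) \<noteq> T (3,n)"
        using inj_onD[OF inj, of "(2,c)" "(1,n)"] inj_onD[OF inj, of "(2,c)" "(3,n)"] by auto
    qed
    note neq = this
    show "?i \<notin> set mid"
    proof
      assume "?i \<in> set mid"
      then obtain c where "c \<in> set (rev [2..<n])" "T (2,c) = ?i" unfolding mid_def by auto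
      then show False using neq(1)[of c] by simp
    qed
    show "?i + 1 \<notin> set mid"
    proof
      assume "?i + 1 \<in> set mid"
      then obtain c where "c \<in> set (rev [2..<n])" "T (2,c) = T (3,n)" unfolding mid_def m by auto
      then show False using neq(2)[of c] by simp
    qed
  qed
  have f: "filter (\<lambda>x. ?i < x) mid = filter (\<lambda>x. \<not> x < ?i + 1) mid"
    by (rule filter_cong) (use notin in auto)
  have "inversions (reading_word (lobster_alpha (n - 2) 1 1) (lobster_beta (n - 2)) T)
      = inversions ((?i + 1) # mid @ [?i])"
    using reading_word_eq[OF n, of T] m by (simp add: mid_def)
  also have "\<dots> = length (filter (\<lambda>y. y < ?i + 1) mid) + 1 + inversions mid
        + length (filter (\<lambda>x. ?i < x) mid)"
    by (simp add: inv_Cons inv_snoc)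
  also have "\<dots> = length mid + 1 + inversions mid"
    unfolding f using sum_length_filter_compl[of "\<lambda>y. y < ?i + 1" mid] by simp
  also have "\<dots> = n - 1 + ((n - 2) choose 2)" using len inv_dec[OF dec] n by simp
  finally show ?thesis .
qed


lemma root_bij:
  assumes n: "3 \<le> n"
  shows "bij_betw (\<lambda>(i,j). (\<lambda>k. evec i k - evec j k)) {(i,j). valid n i j} (pos_roots_A n)"
  unfolding bij_betw_def
proof
  show "inj_on (\<lambda>(i,j). (\<lambda>k. evec i k - evec j k)) {(i,j). valid n i j}"
  proof (rule inj_onI)
    fix x y assume x: "x \<in> {(i,j). valid n i j}" and y: "y \<in> {(i,j). valid n i j}"
      and e: "(\<lambda>(i,j). (\<lambda>k. evec i k - evec j k)) x = (\<lambda>(i,j). (\<lambda>k. evec i k - evec j k)) y"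
    obtain i j where xi: "x = (i,j)" by fastforce
    obtain i' j' where yi: "y = (i',j')" by fastforce
    have ij: "i < j" "i' < j'" using x y xi yi by (auto simp: valid_def)
    have e': "evec i k - evec j k = evec i' k - evec j' k" for k
      using e xi yi by (simp add: fun_eq_iff)
    have "i = i'" using e'[of i] ij by (auto simp: evec_def split: if_splits)
    moreover have "j = j'" using e'[of j] ij by (auto simp: evec_def split: if_splits)
    ultimately show "x = y" using xi yi by simp
  qed
  show "(\<lambda>(i,j). (\<lambda>k. evec i k - evec j k)) ` {(i,j). valid n i j} = pos_roots_A n"
    by (auto simp: pos_roots_A_def valid_def)
qed

lemma pair_bij:
  assumes n: "3 \<le> n"
  shows "bij_betw (\<lambda>(i,j). (i - 1, n - j)) {(i,j). valid n i j} {p :: nat \<times> nat. fst p + snd p \<le> n - 2}"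
proof (rule bij_betw_byWitness[where f' = "\<lambda>(p,q). (p + 1, n - q)"])
  show "\<forall>a\<in>{(i, j). valid n i j}. (\<lambda>(p, q). (p + 1, n - q)) ((\<lambda>(i, j). (i - 1, n - j)) a) = a"
    by (auto simp: valid_def)
  show "\<forall>a'\<in>{p. fst p + snd p \<le> n - 2}. (\<lambda>(i, j). (i - 1, n - j)) ((\<lambda>(p, q). (p + 1, n - q)) a') = a'"
    using n by auto
  show "(\<lambda>(i, j). (i - 1, n - j)) ` {(i, j). valid n i j} \<subseteq> {p. fst p + snd p \<le> n - 2}"
    by (auto simp: valid_def)
  show "(\<lambda>(p, q). (p + 1, n - q)) ` {p. fst p + snd p \<le> n - 2} \<subseteq> {(i, j). valid n i j}"
    using n by (auto simp: valid_def)
qed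

lemma min_char:
  assumes n: "3 \<le> n"
  shows "minimal_in (SET (LD n)) (set_le (LD n)) T \<longleftrightarrow> T \<in> SET (LD n) \<and> T (3,n) = T (1,n) + 1"
proof
  assume m: "minimal_in (SET (LD n)) (set_le (LD n)) T"
  then have T: "T \<in> SET (LD n)" by (simp add: minimal_in_def)
  let ?i = "T (1,n)" and ?j = "T (3,n)"
  have v: "valid n ?i ?j" using SET_range[OF n T] SET_col[OF T] by (simp add: valid_def)
  have "?j = ?i + 1"
  proof (rule ccontr)
    assume "?j \<noteq> ?i + 1"
    then have v2: "valid n (?i + 1) ?j" using v by (auto simp: valid_def)
    have Teq: "tab n ?i ?j = T" by (rule SET_char[OF n T, symmetric])
    have "set_le (LD n) (tab n (?i+1) ?j) (tab n ?i ?j)" using le_tab[OF n v2 v] by simp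
    then have "set_le (LD n) (tab n (?i+1) ?j) T" unfolding Teq .
    moreover have mm: "\<forall>y\<in>SET (LD n). set_le (LD n) y T \<longrightarrow> y = T"
      using m by (simp add: minimal_in_def)
    ultimately have "tab n (?i+1) ?j = T" using tab_SET'[OF n v2] by blast
    then have "tab n (?i+1) ?j = tab n ?i ?j" unfolding Teq .
    from tab_inj[OF n this] show False by simp
  qed
  then show "T \<in> SET (LD n) \<and> T (3,n) = T (1,n) + 1" using T by simp
next
  assume a: "T \<in> SET (LD n) \<and> T (3,n) = T (1,n) + 1"
  then have T: "T \<in> SET (LD n)" by simp
  let ?i = "T (1,n)" and ?j = "T (3,n)"
  have v: "valid n ?i ?j" using SET_range[OF n T] SET_col[OF T] by (simp add: valid_def)
  show "minimal_in (SET (LD n)) (set_le (LD n)) T"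
    unfolding minimal_in_def
  proof (intro conjI ballI impI)
    show "T \<in> SET (LD n)" by (rule T)
    fix y assume y: "y \<in> SET (LD n)" and le: "set_le (LD n) y T"
    have vy: "valid n (y (1,n)) (y (3,n))" using SET_range[OF n y] SET_col[OF y] by (simp add: valid_def)
    have "set_le (LD n) (tab n (y (1,n)) (y (3,n))) (tab n ?i ?j)"
      using le unfolding SET_char[OF n y, symmetric] SET_char[OF n T, symmetric] .
    then have "?i \<le> y (1,n)" "y (3,n) \<le> ?j" using le_tab[OF n vy v] by simp_all
    then have "y (1,n) = ?i" "y (3,n) = ?j" using a vy by (auto simp: valid_def)
    then show "y = T" using SET_unique[OF n y T] by simp
  qed
qed

lemma min_set:
  assumes n: "3 \<le> n"
  shows "{T. minimal_in (SET (LD n)) (set_le (LD n)) T} = (\<lambda>i. tab n i (i+1)) ` {1..n-1}"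
proof
  show "{T. minimal_in (SET (LD n)) (set_le (LD n)) T} \<subseteq> (\<lambda>i. tab n i (i+1)) ` {1..n-1}"
  proof
    fix T assume "T \<in> {T. minimal_in (SET (LD n)) (set_le (LD n)) T}"
    then have T: "T \<in> SET (LD n)" and m: "T (3,n) = T (1,n) + 1" using min_char[OF n] by auto
    have "T = tab n (T (1,n)) (T (1,n) + 1)" using SET_char[OF n T] m by simp
    moreover have "T (1,n) \<in> {1..n-1}" using SET_range[OF n T] m by auto
    ultimately show "T \<in> (\<lambda>i. tab n i (i+1)) ` {1..n-1}" by blast
  qed
next
  show "(\<lambda>i. tab n i (i+1)) ` {1..n-1} \<subseteq> {T. minimal_in (SET (LD n)) (set_le (LD n)) T}"
  proof
    fix T assume "T \<in> (\<lambda>i. tab n i (i+1)) ` {1..n-1}"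
    then obtain i where i: "i \<in> {1..n-1}" "T = tab n i (i+1)" by blast
    have v: "valid n i (i+1)" using i n by (auto simp: valid_def)
    have "T \<in> SET (LD n)" using tab_SET'[OF n v] i by simp
    moreover have "T (3,n) = T (1,n) + 1" using i n by (simp add: tab_def)
    ultimately show "T \<in> {T. minimal_in (SET (LD n)) (set_le (LD n)) T}" using min_char[OF n] by simp
  qed
qed

lemma M_tab_eq:
  assumes n: "3 \<le> n" and i: "1 \<le> i" "i \<le> n - 1"
  shows "M_tab n (i + 1) i = tab n i (i+1)"
proof -
  have v: "valid n i (i+1)" using i n by (auto simp: valid_def)
  have vals: "tab n i (i+1) (3,n) = i + 1" "tab n i (i+1) (1,n) = i" using n by (simp_all add: tab_def)
  show ?thesis
    unfolding M_tab_def D_eq[OF n]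
  proof (rule the_equality)
    show "tab n i (i + 1) \<in> SET (LD n) \<and> tab n i (i + 1) (3, n) = i + 1 \<and> tab n i (i + 1) (1, n) = i"
      using tab_SET'[OF n v] vals by simp
    fix T assume "T \<in> SET (LD n) \<and> T (3, n) = i + 1 \<and> T (1, n) = i"
    then show "T = tab n i (i + 1)" using SET_unique[OF n _ tab_SET'[OF n v]] vals by auto
  qed
qed

lemma card_pairs:
  "card {(i,j). valid n i j} = n choose 2"
proof -
  have "bij_betw (\<lambda>(i,j). {i,j}) {(i,j). valid n i j} {B. B \<subseteq> {1..n} \<and> card B = 2}"
    unfolding bij_betw_def
  proof
    show "inj_on (\<lambda>(i,j). {i,j}) {(i,j). valid n i j}"
      by (auto simp: inj_on_def valid_def doubleton_eq_iff)
    show "(\<lambda>(i,j). {i,j}) ` {(i,j). valid n i j} = {B. B \<subseteq> {1..n} \<and> card B = 2}"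
    proof
      show "(\<lambda>(i,j). {i,j}) ` {(i,j). valid n i j} \<subseteq> {B. B \<subseteq> {1..n} \<and> card B = 2}"
        by (auto simp: valid_def)
      show "{B. B \<subseteq> {1..n} \<and> card B = 2} \<subseteq> (\<lambda>(i,j). {i,j}) ` {(i,j). valid n i j}"
      proof
        fix B assume B: "B \<in> {B. B \<subseteq> {1..n} \<and> card B = 2}"
        then obtain x y where xy: "x \<noteq> y" "B = {x,y}" by (auto simp: card_2_iff)
        have "B = {min x y, max x y}" using xy by (auto simp: min_def max_def)
        moreover have "valid n (min x y) (max x y)" using xy B by (auto simp: valid_def min_def max_def)
        ultimately show "B \<in> (\<lambda>(i,j). {i,j}) ` {(i,j). valid n i j}" by force
      qed
    qed
  qed
  then have "card {(i,j). valid n i j} = card {B. B \<subseteq> {1..n} \<and> card B = 2}"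
    by (rule bij_betw_same_card)
  also have "\<dots> = n choose 2" by (simp add: n_subsets)
  finally show ?thesis .
qed

theorem proposition5p2:
  fixes n :: nat
  assumes "n \<ge> 3"
  defines "D \<equiv> lobster (n - 2) 1 1"
  shows "(\<forall>i j. 1 \<le> i \<and> i < j \<and> j \<le> n \<longrightarrow>
            (\<exists>!T. T \<in> SET D \<and> T (3, n) = j \<and> T (1, n) = i))
    \<and> poset_iso (SET D) (set_le D) (pos_roots_A n) (root_le_A n)
    \<and> poset_iso (SET D) (set_le D)
        {p :: nat \<times> nat. fst p + snd p \<le> n - 2} (\<lambda>p q. fst p \<ge> fst q \<and> snd p \<ge> snd q)
    \<and> card {T. minimal_in (SET D) (set_le D) T} = n - 1
    \<and> {T. minimal_in (SET D) (set_le D) T} = {M_tab n (i + 1) i | i. 1 \<le> i \<and> i \<le> n - 1}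
    \<and> (\<forall>T T'. minimal_in (SET D) (set_le D) T \<longrightarrow> minimal_in (SET D) (set_le D) T' \<longrightarrow>
         inversions (reading_word (lobster_alpha (n - 2) 1 1) (lobster_beta (n - 2)) T)
       = inversions (reading_word (lobster_alpha (n - 2) 1 1) (lobster_beta (n - 2)) T'))
    \<and> card (SET D) = n choose 2"
proof -
  have n: "3 \<le> n" using assms by simp
  have DD: "D = LD n" unfolding D_def by (rule D_eq[OF n])
  have c1: "\<forall>i j. 1 \<le> i \<and> i < j \<and> j \<le> n \<longrightarrow> (\<exists>!T. T \<in> SET D \<and> T (3, n) = j \<and> T (1, n) = i)"
  proof (intro allI impI)
    fix i j assume ij: "1 \<le> i \<and> i < j \<and> j \<le> n"
    then have v: "valid n i j" by (simp add: valid_def)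
    have vals: "tab n i j (3,n) = j" "tab n i j (1,n) = i" using n by (simp_all add: tab_def)
    show "\<exists>!T. T \<in> SET D \<and> T (3, n) = j \<and> T (1, n) = i"
    proof (rule ex1I[of _ "tab n i j"])
      show "tab n i j \<in> SET D \<and> tab n i j (3, n) = j \<and> tab n i j (1, n) = i"
        using tab_SET'[OF n v] vals DD by simp
      fix T assume "T \<in> SET D \<and> T (3, n) = j \<and> T (1, n) = i"
      then show "T = tab n i j" using SET_unique[OF n _ tab_SET'[OF n v]] vals DD by auto
    qed
  qed
  have c2: "poset_iso (SET D) (set_le D) (pos_roots_A n) (root_le_A n)"
    unfolding DD
    by (rule iso_from_pairs[OF n root_bij[OF n]]) (simp add: root_le_iff)
  have c3: "poset_iso (SET D) (set_le D)
        {p :: nat \<times> nat. fst p + snd p \<le> n - 2} (\<lambda>p q. fst p \<ge> fst q \<and> snd p \<ge> snd q)"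
    unfolding DD
    by (rule iso_from_pairs[OF n pair_bij[OF n]]) (auto simp: valid_def)
  have injm: "inj_on (\<lambda>i. tab n i (i+1)) {1..n-1}"
    using tab_inj[OF n] by (auto simp: inj_on_def)
  have c4: "card {T. minimal_in (SET D) (set_le D) T} = n - 1"
    unfolding DD min_set[OF n] using card_image[OF injm] by simp
  have c5: "{T. minimal_in (SET D) (set_le D) T} = {M_tab n (i + 1) i | i. 1 \<le> i \<and> i \<le> n - 1}"
    unfolding DD min_set[OF n] using M_tab_eq[OF n] by force
  have c6: "\<forall>T T'. minimal_in (SET D) (set_le D) T \<longrightarrow> minimal_in (SET D) (set_le D) T' \<longrightarrow>
         inversions (reading_word (lobster_alpha (n - 2) 1 1) (lobster_beta (n - 2)) T)
       = inversions (reading_word (lobster_alpha (n - 2) 1 1) (lobster_beta (n - 2)) T')"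
    unfolding DD using min_char[OF n] inv_min[OF n] by simp
  have c7: "card (SET D) = n choose 2"
    unfolding DD using bij_betw_same_card[OF bij_h[OF n]] card_pairs by simp
  show ?thesis using c1 c2 c3 c4 c5 c6 c7 by blast
qed

end
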